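(* Let $A\in\mathbb{R}^{n\times n}$. The following are equivalent: (i) there exists a vector $v>0$ with $(A^T-I)v=0$, and $A-I+\mathrm{diag}(d)$ is a nonsingular $M$-matrix for every $d\in\mathbb{R}^n$ with $d\ge 0$ and $d\neq 0$; (ii) $A-I$ is an irreducible singular $M$-matrix.
   Context: A $Z$-matrix is a real square matrix whose off-diagonal entries are all nonpositive; any $Z$-matrix can be written $sI-B$ with $B\ge 0$ entrywise, and it is a nonsingular $M$-matrix if $s>\rho(B)$ and a singular $M$-matrix if $s=\rho(B)$, where $\rho$ is spectral radius. A square matrix $M$ is reducible if there is a permutation matrix $P$ with $P^TMP=\begin{bmatrix}M_{11}&M_{12}\\0&M_{22}\end{bmatrix}$ where $M_{11},M_{22}$ are square (nonempty) blocks; it is irreducible otherwise. Vector inequalities $v>0$, $d\ge 0$ are componentwise. *)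

theory Defs
  imports "Jordan_Normal_Form.Spectral_Radius"
begin

definition nonneg_mat :: "nat \<Rightarrow> real mat \<Rightarrow> bool" where
  "nonneg_mat n B \<longleftrightarrow> (\<forall>i<n. \<forall>j<n. B $$ (i, j) \<ge> 0)"

definition rho :: "real mat \<Rightarrow> real" where
  "rho B = spectral_radius (map_mat complex_of_real B)"

definition nonsingular_M_matrix :: "nat \<Rightarrow> real mat \<Rightarrow> bool" where
  "nonsingular_M_matrix n M \<longleftrightarrow> M \<in> carrier_mat n n \<and>
     (\<exists>s B. B \<in> carrier_mat n n \<and> nonneg_mat n B \<and> M = s \<cdot>\<^sub>m 1\<^sub>m n - B \<and> s > rho B)"

definition singular_M_matrix :: "nat \<Rightarrow> real mat \<Rightarrow> bool" where
  "singular_M_matrix n M \<longleftrightarrow> M \<in> carrier_mat n n \<and>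
     (\<exists>s B. B \<in> carrier_mat n n \<and> nonneg_mat n B \<and> M = s \<cdot>\<^sub>m 1\<^sub>m n - B \<and> s = rho B)"

definition perm_matrix :: "nat \<Rightarrow> (nat \<Rightarrow> nat) \<Rightarrow> real mat" where
  "perm_matrix n p = mat n n (\<lambda>(i, j). if i = p j then 1 else 0)"

(* P^T M P = [[M11, M12], [0, M22]] with M11 of size k x k, M22 of size (n-k) x (n-k), both nonempty *)
definition reducible :: "nat \<Rightarrow> real mat \<Rightarrow> bool" where
  "reducible n M \<longleftrightarrow> (\<exists>p k. p permutes {..<n} \<and> 0 < k \<and> k < n \<and>
     (let P = perm_matrix n p; N = transpose_mat P * M * P in
        \<forall>i j. k \<le> i \<and> i < n \<and> j < k \<longrightarrow> N $$ (i, j) = 0))"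

definition irreducible_mat :: "nat \<Rightarrow> real mat \<Rightarrow> bool" where
  "irreducible_mat n M \<longleftrightarrow> M \<in> carrier_mat n n \<and> \<not> reducible n M"

definition diag_vec :: "real vec \<Rightarrow> real mat" where
  "diag_vec d = mat (dim_vec d) (dim_vec d) (\<lambda>(i, j). if i = j then d $ i else 0)"

end

theory Submission
  imports Defs
begin

definition mv :: "nat \<Rightarrow> real mat \<Rightarrow> (nat \<Rightarrow> real) \<Rightarrow> nat \<Rightarrow> real" where
  "mv n T x i = (\<Sum>j<n. T $$ (i,j) * x j)"

lemma cmv_entry:
  assumes B: "B \<in> carrier_mat n n" and y: "y \<in> carrier_vec n" and i: "i < n"
  shows "(map_mat complex_of_real B *\<^sub>v y) $ i = (\<Sum>j<n. complex_of_real (B $$ (i,j)) * y $ j)"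
  using B y i by (auto simp: scalar_prod_def lessThan_atLeast0 intro!: sum.cong)

lemma eig_iff:
  assumes B: "B \<in> carrier_mat n n" and y: "y \<in> carrier_vec n"
  shows "(map_mat complex_of_real B *\<^sub>v y = \<mu> \<cdot>\<^sub>v y) \<longleftrightarrow>
     (\<forall>i<n. (\<Sum>j<n. complex_of_real (B $$ (i,j)) * y $ j) = \<mu> * y $ i)"
proof
  assume "map_mat complex_of_real B *\<^sub>v y = \<mu> \<cdot>\<^sub>v y"
  then show "\<forall>i<n. (\<Sum>j<n. complex_of_real (B $$ (i,j)) * y $ j) = \<mu> * y $ i"
    using cmv_entry[OF B y] y by (metis carrier_vecD index_smult_vec(1))
next
  assume h: "\<forall>i<n. (\<Sum>j<n. complex_of_real (B $$ (i,j)) * y $ j) = \<mu> * y $ i"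
  show "map_mat complex_of_real B *\<^sub>v y = \<mu> \<cdot>\<^sub>v y"
    by (rule eq_vecI, insert B y h cmv_entry[OF B y], auto)
qed

lemma rho_mem:
  assumes B: "B \<in> carrier_mat n n" and n: "n > 0"
  shows "rho B \<in> norm ` spectrum (map_mat complex_of_real B)"
  using spectral_radius_mem_max(1)[of "map_mat complex_of_real B" n] B n unfolding rho_def by auto

lemma rho_nonneg:
  assumes B: "B \<in> carrier_mat n n" and n: "n > 0"
  shows "rho B \<ge> 0"
  using rho_mem[OF B n] by auto

lemma eig_le_rho:
  assumes B: "B \<in> carrier_mat n n" and y: "y \<in> carrier_vec n" and y0: "y \<noteq> 0\<^sub>v n"
    and e: "map_mat complex_of_real B *\<^sub>v y = \<mu> \<cdot>\<^sub>v y"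
  shows "cmod \<mu> \<le> rho B"
proof -
  have ev: "eigenvalue (map_mat complex_of_real B) \<mu>"
    unfolding eigenvalue_def eigenvector_def using B y y0 e by auto
  have n: "n > 0" using eigenvalue_imp_nonzero_dim[OF _ ev, of n] B by auto
  show ?thesis unfolding rho_def
    by (rule spectral_radius_mem_max(2)[of _ n], insert B n ev, auto simp: spectrum_def)
qed

lemma rho_attained:
  assumes B: "B \<in> carrier_mat n n" and n: "n > 0"
  shows "\<exists>\<mu> y. y \<in> carrier_vec n \<and> y \<noteq> 0\<^sub>v n \<and> map_mat complex_of_real B *\<^sub>v y = \<mu> \<cdot>\<^sub>v y \<and> cmod \<mu> = rho B"
proof -
  from rho_mem[OF B n] obtain \<mu> where mu: "\<mu> \<in> spectrum (map_mat complex_of_real B)" "rho B = cmod \<mu>" by auto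
  then obtain y where "eigenvector (map_mat complex_of_real B) y \<mu>"
    unfolding spectrum_def eigenvalue_def by auto
  then show ?thesis using B mu unfolding eigenvector_def by (intro exI[of _ \<mu>] exI[of _ y], auto)
qed

lemma rho_transpose:
  assumes B: "B \<in> carrier_mat n n"
  shows "rho (transpose_mat B) = rho B"
proof -
  have C: "map_mat complex_of_real B \<in> carrier_mat n n" using B by auto
  have "spectrum (transpose_mat (map_mat complex_of_real B)) = spectrum (map_mat complex_of_real B)"
    using spectrum_root_char_poly[OF C] spectrum_root_char_poly[of "transpose_mat (map_mat complex_of_real B)" n]
      char_poly_transpose_mat[OF C] C by auto
  moreover have "map_mat complex_of_real (transpose_mat B) = transpose_mat (map_mat complex_of_real B)"
    by (rule map_mat_transpose[symmetric])
  ultimately show ?thesis unfolding rho_def spectral_radius_def by simp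
qed

lemma abs_eig:
  assumes B: "B \<in> carrier_mat n n" and nn: "nonneg_mat n B"
    and y: "y \<in> carrier_vec n" and e: "map_mat complex_of_real B *\<^sub>v y = \<mu> \<cdot>\<^sub>v y" and i: "i < n"
  shows "cmod \<mu> * cmod (y $ i) \<le> mv n B (\<lambda>j. cmod (y $ j)) i"
proof -
  have "(\<Sum>j<n. complex_of_real (B $$ (i,j)) * y $ j) = \<mu> * y $ i"
    using eig_iff[OF B y, of \<mu>] e i by blast
  then have "cmod \<mu> * cmod (y $ i) = cmod (\<Sum>j<n. complex_of_real (B $$ (i,j)) * y $ j)"
    by (simp add: norm_mult)
  also have "\<dots> \<le> (\<Sum>j<n. cmod (complex_of_real (B $$ (i,j)) * y $ j))" by (rule norm_sum)
  also have "\<dots> = mv n B (\<lambda>j. cmod (y $ j)) i"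
    unfolding mv_def using nn i by (intro sum.cong, auto simp: norm_mult nonneg_mat_def)
  finally show ?thesis .
qed

lemma perron_sub:
  assumes B: "B \<in> carrier_mat n n" and nn: "nonneg_mat n B" and n: "n > 0"
  shows "\<exists>z. (\<forall>i<n. z i \<ge> 0) \<and> (\<exists>i<n. z i > 0) \<and> (\<forall>i<n. rho B * z i \<le> mv n B z i)"
proof -
  from rho_attained[OF B n] obtain \<mu> y where y: "y \<in> carrier_vec n" "y \<noteq> 0\<^sub>v n"
    and e: "map_mat complex_of_real B *\<^sub>v y = \<mu> \<cdot>\<^sub>v y" and r: "cmod \<mu> = rho B" by blast
  from y obtain i where i: "i < n" "y $ i \<noteq> 0" by (metis carrier_vecD eq_vecI index_zero_vec(1,2))
  show ?thesis
    by (intro exI[of _ "\<lambda>j. cmod (y $ j)"], insert abs_eig[OF B nn y(1) e] r i, auto)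
qed

lemma pow_link:
  assumes B: "B \<in> carrier_mat n n" and i: "i < n"
  shows "(mv n B ^^ k) x i = (\<Sum>j<n. (B ^\<^sub>m k) $$ (i,j) * x j)"
  using i
proof (induct k arbitrary: x i)
  case 0
  have "(\<Sum>j<n. (B ^\<^sub>m 0) $$ (i,j) * x j) = (\<Sum>j<n. if i = j then x j else 0)"
    using B 0 by (intro sum.cong, auto)
  then show ?case using 0 by simp
next
  case (Suc k)
  have "(mv n B ^^ Suc k) x i = (mv n B ^^ k) (mv n B x) i"
    by (simp only: funpow_Suc_right o_apply)
  also have "\<dots> = (\<Sum>j<n. (B ^\<^sub>m k) $$ (i,j) * mv n B x j)"
    by (rule Suc(1)[OF Suc(2)])
  also have "\<dots> = (\<Sum>j<n. (B ^\<^sub>m k) $$ (i,j) * (\<Sum>l<n. B $$ (j,l) * x l))"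
    by (simp add: mv_def)
  also have "\<dots> = (\<Sum>l<n. (\<Sum>j<n. (B ^\<^sub>m k) $$ (i,j) * B $$ (j,l)) * x l)"
  proof -
    have "(\<Sum>j<n. (B ^\<^sub>m k) $$ (i,j) * (\<Sum>l<n. B $$ (j,l) * x l))
       = (\<Sum>j<n. \<Sum>l<n. (B ^\<^sub>m k) $$ (i,j) * B $$ (j,l) * x l)"
      by (simp add: sum_distrib_left mult.assoc)
    also have "\<dots> = (\<Sum>l<n. \<Sum>j<n. (B ^\<^sub>m k) $$ (i,j) * B $$ (j,l) * x l)"
      by (rule sum.swap)
    also have "\<dots> = (\<Sum>l<n. (\<Sum>j<n. (B ^\<^sub>m k) $$ (i,j) * B $$ (j,l)) * x l)"
      by (simp add: sum_distrib_right)
    finally show ?thesis .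
  qed
  also have "\<dots> = (\<Sum>l<n. (B ^\<^sub>m Suc k) $$ (i,l) * x l)"
    using B Suc(2) by (intro sum.cong refl, simp add: scalar_prod_def lessThan_atLeast0)
  finally show ?case .
qed

lemma mv_mono:
  assumes nn: "nonneg_mat n B" and le: "\<forall>j<n. x j \<le> y j" and i: "i < n"
  shows "mv n B x i \<le> mv n B y i"
  unfolding mv_def using nn le i by (intro sum_mono mult_left_mono, auto simp: nonneg_mat_def)

lemma growth:
  assumes nn: "nonneg_mat n B" and x: "\<forall>i<n. x i \<ge> 0" and a: "a \<ge> 0"
    and ge: "\<forall>i<n. a * x i \<le> mv n B x i"
  shows "\<forall>i<n. a ^ k * x i \<le> (mv n B ^^ k) x i"
proof (induct k)
  case 0 then show ?case by simp
next
  case (Suc k)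
  show ?case
  proof (intro allI impI)
    fix i assume i: "i < n"
    have "a ^ Suc k * x i = a ^ k * (a * x i)" by simp
    also have "\<dots> \<le> a ^ k * mv n B x i" using ge i a by (intro mult_left_mono, auto)
    also have "\<dots> = mv n B (\<lambda>j. a ^ k * x j) i" unfolding mv_def by (simp add: sum_distrib_left algebra_simps)
    also have "\<dots> \<le> mv n B ((mv n B ^^ k) x) i" using Suc i by (intro mv_mono[OF nn], auto)
    also have "\<dots> = (mv n B ^^ Suc k) x i" by simp
    finally show "a ^ Suc k * x i \<le> (mv n B ^^ Suc k) x i" .
  qed
qed

lemma L1:
  assumes B: "B \<in> carrier_mat n n" and nn: "nonneg_mat n B" and n: "n > 0"
    and x: "\<forall>i<n. x i \<ge> 0" and i0: "i0 < n" "x i0 > 0"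
    and ge: "\<forall>i<n. lam * x i \<le> mv n B x i"
  shows "lam \<le> rho B"
proof (rule ccontr)
  assume "\<not> lam \<le> rho B"
  then have lr: "rho B < lam" by auto
  define r where "r = rho B"
  have r0: "r \<ge> 0" using rho_nonneg[OF B n] r_def by auto
  define c where "c = 2 / (r + lam)"
  have c0: "c > 0" using lr r0 r_def c_def by auto
  have clam: "c * lam > 1" using lr r0 unfolding c_def r_def by (simp add: field_simps)
  have cr: "c * r < 1" using lr r0 unfolding c_def r_def by (simp add: field_simps)
  define B' where "B' = c \<cdot>\<^sub>m B"
  have B': "B' \<in> carrier_mat n n" using B unfolding B'_def by auto
  have B'e: "\<And>i j. i < n \<Longrightarrow> j < n \<Longrightarrow> B' $$ (i,j) = c * B $$ (i,j)"
    using B unfolding B'_def by auto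
  have nn': "nonneg_mat n B'" using nn c0 B'e unfolding nonneg_mat_def by auto
  have "rho B' < 1"
  proof -
    from rho_attained[OF B' n] obtain \<mu> y where y: "y \<in> carrier_vec n" "y \<noteq> 0\<^sub>v n"
      and e: "map_mat complex_of_real B' *\<^sub>v y = \<mu> \<cdot>\<^sub>v y" and rr: "cmod \<mu> = rho B'" by blast
    have e2: "\<forall>i<n. (\<Sum>j<n. complex_of_real (B' $$ (i,j)) * y $ j) = \<mu> * y $ i"
      using eig_iff[OF B' y(1)] e by blast
    have "\<forall>i<n. (\<Sum>j<n. complex_of_real (B $$ (i,j)) * y $ j) = (\<mu> / complex_of_real c) * y $ i"
    proof (intro allI impI)
      fix i assume i: "i < n"
      have "(\<Sum>j<n. complex_of_real (B' $$ (i,j)) * y $ j)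
          = complex_of_real c * (\<Sum>j<n. complex_of_real (B $$ (i,j)) * y $ j)"
        using B'e i by (simp add: sum_distrib_left mult.assoc)
      then show "(\<Sum>j<n. complex_of_real (B $$ (i,j)) * y $ j) = (\<mu> / complex_of_real c) * y $ i"
        using e2 i c0 by (simp add: field_simps)
    qed
    then have "map_mat complex_of_real B *\<^sub>v y = (\<mu> / complex_of_real c) \<cdot>\<^sub>v y"
      using eig_iff[OF B y(1)] by blast
    from eig_le_rho[OF B y this] have "cmod \<mu> / c \<le> r" using c0 r_def by (simp add: norm_divide)
    then have "cmod \<mu> \<le> c * r" using c0 by (simp add: field_simps)
    then show ?thesis using cr rr by auto
  qed
  then have "spectral_radius (map_mat complex_of_real B') < 1" unfolding rho_def .
  from spectral_radius_jnf_norm_bound_less_1_upper_triangular[OF _ this, of n] B'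
  obtain K where K: "\<And>k. norm_bound (map_mat complex_of_real B' ^\<^sub>m k) K" by auto
  have Kb: "\<And>k i j. i < n \<Longrightarrow> j < n \<Longrightarrow> (B' ^\<^sub>m k) $$ (i,j) \<le> K"
  proof -
    fix k i j assume ij: "i < n" "j < n"
    have "map_mat complex_of_real B' ^\<^sub>m k = map_mat complex_of_real (B' ^\<^sub>m k)"
      by (rule of_real_hom.mat_hom_pow[OF B', symmetric])
    with K[of k] have "norm_bound (map_mat complex_of_real (B' ^\<^sub>m k)) K" by simp
    then have "cmod (complex_of_real ((B' ^\<^sub>m k) $$ (i,j))) \<le> K"
      unfolding norm_bound_def using ij B' by auto
    then show "(B' ^\<^sub>m k) $$ (i,j) \<le> K" by auto
  qed
  have ge': "\<forall>i<n. (c * lam) * x i \<le> mv n B' x i"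
  proof (intro allI impI)
    fix i assume i: "i < n"
    have "mv n B' x i = c * mv n B x i" unfolding mv_def using B'e i
      by (simp add: sum_distrib_left mult.assoc)
    then show "(c * lam) * x i \<le> mv n B' x i" using ge i c0 by (simp add: mult.assoc)
  qed
  have gr: "\<forall>i<n. (c * lam) ^ k * x i \<le> (mv n B' ^^ k) x i" for k
    by (rule growth[OF nn' x _ ge'], insert clam, auto)
  have bd: "(c * lam) ^ k * x i0 \<le> K * (\<Sum>j<n. x j)" for k
  proof -
    have "(c * lam) ^ k * x i0 \<le> (mv n B' ^^ k) x i0" using gr i0 by auto
    also have "\<dots> = (\<Sum>j<n. (B' ^\<^sub>m k) $$ (i0,j) * x j)" by (rule pow_link[OF B' i0(1)])
    also have "\<dots> \<le> (\<Sum>j<n. K * x j)" using Kb x i0 by (intro sum_mono mult_right_mono, auto)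
    finally show ?thesis by (simp add: sum_distrib_left)
  qed
  from real_arch_pow[OF clam, of "K * (\<Sum>j<n. x j) / x i0"] obtain k
    where "K * (\<Sum>j<n. x j) / x i0 < (c * lam) ^ k" by auto
  with bd[of k] i0 show False by (simp add: field_simps)
qed

lemma L1s:
  assumes B: "B \<in> carrier_mat n n" and nn: "nonneg_mat n B" and n: "n > 0"
    and u: "\<forall>i<n. u i > 0" and gt: "\<forall>i<n. r * u i < mv n B u i"
  shows "r < rho B"
proof -
  define e where "e = Min ((\<lambda>i. (mv n B u i - r * u i) / u i) ` {..<n})"
  have e0: "e > 0" unfolding e_def using n u gt by (subst Min_gr_iff, auto)
  have ele: "e \<le> (mv n B u i - r * u i) / u i" if "i < n" for i
    unfolding e_def using that by (intro Min_le, auto)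
  have "(r + e) * u i \<le> mv n B u i" if i: "i < n" for i
  proof -
    have "e * u i \<le> mv n B u i - r * u i" using ele[OF i] u i by (simp add: field_simps)
    then show ?thesis by (simp add: algebra_simps)
  qed
  then have "r + e \<le> rho B" using L1[OF B nn n, of u 0 "r + e"] u n by (simp add: less_imp_le)
  then show ?thesis using e0 by auto
qed

definition irr :: "nat \<Rightarrow> real mat \<Rightarrow> bool" where
  "irr n T \<longleftrightarrow> (\<forall>S. S \<subseteq> {..<n} \<and> S \<noteq> {} \<and> S \<noteq> {..<n} \<longrightarrow> (\<exists>a<n. a \<notin> S \<and> (\<exists>b\<in>S. T $$ (a,b) \<noteq> 0)))"

definition supp :: "nat \<Rightarrow> (nat \<Rightarrow> real) \<Rightarrow> nat set" where
  "supp n x = {i. i < n \<and> x i > 0}"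

definition fstep :: "nat \<Rightarrow> real mat \<Rightarrow> (nat \<Rightarrow> real) \<Rightarrow> nat \<Rightarrow> real" where
  "fstep n T x i = x i + mv n T x i"

lemma mv_nonneg:
  assumes nn: "nonneg_mat n T" and x: "\<forall>j<n. x j \<ge> 0" and i: "i < n"
  shows "mv n T x i \<ge> 0"
  unfolding mv_def using nn x i by (intro sum_nonneg mult_nonneg_nonneg, auto simp: nonneg_mat_def)

lemma mv_ge_term:
  assumes nn: "nonneg_mat n T" and x: "\<forall>j<n. x j \<ge> 0" and i: "i < n" and b: "b < n"
  shows "T $$ (i,b) * x b \<le> mv n T x i"
  unfolding mv_def
  by (rule member_le_sum, insert nn x i b, auto simp: nonneg_mat_def)

lemma fstep_props:
  assumes nn: "nonneg_mat n T" and x: "\<forall>j<n. x j \<ge> 0"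
  shows "\<forall>j<n. fstep n T x j \<ge> 0" "supp n x \<subseteq> supp n (fstep n T x)"
proof -
  show "\<forall>j<n. fstep n T x j \<ge> 0" using mv_nonneg[OF nn x] x unfolding fstep_def by (auto intro: add_nonneg_nonneg)
  show "supp n x \<subseteq> supp n (fstep n T x)" using mv_nonneg[OF nn x] x unfolding fstep_def supp_def
    by (auto intro: add_pos_nonneg)
qed

lemma fstep_grow:
  assumes nn: "nonneg_mat n T" and irr: "irr n T" and x: "\<forall>j<n. x j \<ge> 0"
    and ne: "supp n x \<noteq> {}" and nf: "supp n x \<noteq> {..<n}"
  shows "supp n x \<subset> supp n (fstep n T x)"
proof -
  have "supp n x \<subseteq> {..<n}" unfolding supp_def by auto
  from irr[unfolded irr_def, rule_format, OF conjI[OF this conjI[OF ne nf]]]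
  obtain a b where a: "a < n" "a \<notin> supp n x" and b: "b \<in> supp n x" and t: "T $$ (a,b) \<noteq> 0" by auto
  have bn: "b < n" "x b > 0" using b unfolding supp_def by auto
  have "T $$ (a,b) > 0" using nn t a bn unfolding nonneg_mat_def by (metis order_le_less)
  then have "0 < T $$ (a,b) * x b" using bn by auto
  also have "\<dots> \<le> mv n T x a" by (rule mv_ge_term[OF nn x a(1) bn(1)])
  finally have "a \<in> supp n (fstep n T x)" using x a unfolding supp_def fstep_def
    by (auto intro: add_nonneg_pos)
  then show ?thesis using fstep_props(2)[OF nn x] a by auto
qed

lemma iter_supp:
  assumes nn: "nonneg_mat n T" and irr: "irr n T" and x: "\<forall>j<n. x j \<ge> 0"
    and ne: "supp n x \<noteq> {}"
  shows "(\<forall>j<n. (fstep n T ^^ k) x j \<ge> 0) \<and> min n (k+1) \<le> card (supp n ((fstep n T ^^ k) x))"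
proof (induct k)
  case 0
  have "supp n x \<subseteq> {..<n}" unfolding supp_def by auto
  then have "finite (supp n x)" by (rule finite_subset, auto)
  then have "card (supp n x) \<ge> 1" using ne by (simp add: Suc_leI card_gt_0_iff)
  then show ?case using x by auto
next
  case (Suc k)
  define X where "X = (fstep n T ^^ k) x"
  have X: "\<forall>j<n. X j \<ge> 0" "min n (k+1) \<le> card (supp n X)" using Suc unfolding X_def by auto
  have eq: "(fstep n T ^^ Suc k) x = fstep n T X" unfolding X_def by simp
  have fin: "finite (supp n Y)" for Y by (rule finite_subset[of _ "{..<n}"], auto simp: supp_def)
  have sub: "supp n Y \<subseteq> {..<n}" for Y by (auto simp: supp_def)
  have "min n (Suc k + 1) \<le> card (supp n (fstep n T X))"
  proof (cases "supp n X = {..<n}")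
    case True
    then have "supp n (fstep n T X) = {..<n}" using fstep_props(2)[OF nn X(1)] sub by blast
    then show ?thesis by auto
  next
    case False
    have n0: "n > 0" using ne unfolding supp_def by auto
    then have "min n (k+1) \<ge> 1" by simp
    then have "card (supp n X) \<ge> 1" using X(2) by linarith
    then have "supp n X \<noteq> {}" by auto
    from fstep_grow[OF nn irr X(1) this False] have "card (supp n X) < card (supp n (fstep n T X))"
      by (rule psubset_card_mono[OF fin])
    then show ?thesis using X(2) by auto
  qed
  then show ?case using fstep_props(1)[OF nn X(1)] eq by auto
qed

lemma iter_pos:
  assumes nn: "nonneg_mat n T" and irr: "irr n T" and x: "\<forall>j<n. x j \<ge> 0"
    and i0: "i0 < n" "x i0 > 0"
  shows "\<forall>j<n. (fstep n T ^^ (n - 1)) x j > 0"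
proof -
  have ne: "supp n x \<noteq> {}" using i0 unfolding supp_def by auto
  from iter_supp[OF nn irr x ne, of "n - 1"] have c: "n \<le> card (supp n ((fstep n T ^^ (n - 1)) x))"
    using i0 by auto
  have sub: "supp n ((fstep n T ^^ (n - 1)) x) \<subseteq> {..<n}" by (auto simp: supp_def)
  have "supp n ((fstep n T ^^ (n - 1)) x) = {..<n}"
    by (rule card_subset_eq[OF _ sub], insert c card_mono[OF _ sub], auto)
  then show ?thesis unfolding supp_def by auto
qed

lemma mv_add: "mv n T (\<lambda>j. a j + b j) i = mv n T a i + mv n T b i"
  unfolding mv_def by (simp add: distrib_left sum.distrib)

lemma mv_lin: "mv n T (\<lambda>j. a j - r * b j) i = mv n T a i - r * mv n T b i"
proof -
  have "mv n T (\<lambda>j. a j - r * b j) i = (\<Sum>j<n. T $$ (i,j) * a j - r * (T $$ (i,j) * b j))"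
    unfolding mv_def by (intro sum.cong, auto simp: right_diff_distrib)
  also have "\<dots> = mv n T a i - r * mv n T b i"
    unfolding mv_def by (simp only: sum_subtractf sum_distrib_left)
  finally show ?thesis .
qed

lemma lin_iter:
  assumes w: "\<forall>i<n. w i = mv n T z i - r * z i"
  shows "\<forall>i<n. mv n T ((fstep n T ^^ k) z) i - r * (fstep n T ^^ k) z i = (fstep n T ^^ k) w i"
proof (induct k)
  case 0 then show ?case using w by simp
next
  case (Suc k)
  define X where "X = (fstep n T ^^ k) z"
  define W where "W = (fstep n T ^^ k) w"
  have IH: "\<forall>i<n. mv n T X i - r * X i = W i" using Suc unfolding X_def W_def by auto
  show ?case
  proof (intro allI impI)
    fix i assume i: "i < n"
    have "fstep n T X = (\<lambda>j. X j + mv n T X j)" by (rule ext, simp add: fstep_def)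
    then have "mv n T (fstep n T X) i = mv n T X i + mv n T (mv n T X) i"
      using mv_add[of n T X "mv n T X" i] by simp
    moreover have "mv n T (mv n T X) i - r * mv n T X i = mv n T W i"
    proof -
      have "mv n T W i = (\<Sum>j<n. T $$ (i,j) * W j)" by (simp only: mv_def)
      also have "\<dots> = (\<Sum>j<n. T $$ (i,j) * (mv n T X j - r * X j))" using IH by (intro sum.cong, auto)
      also have "\<dots> = mv n T (\<lambda>j. mv n T X j - r * X j) i" by (simp only: mv_def)
      also have "\<dots> = mv n T (mv n T X) i - r * mv n T X i"
        by (rule mv_lin)
      finally show ?thesis by simp
    qed
    ultimately have "mv n T (fstep n T X) i - r * fstep n T X i = W i + mv n T W i"
      using IH i unfolding fstep_def[of n T X] by (simp add: algebra_simps del: mv_def)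
    then show "mv n T ((fstep n T ^^ Suc k) z) i - r * (fstep n T ^^ Suc k) z i = (fstep n T ^^ Suc k) w i"
      unfolding X_def W_def by (simp add: fstep_def)
  qed
qed

lemma KL:
  assumes T: "T \<in> carrier_mat n n" and nn: "nonneg_mat n T" and irr: "irr n T" and n: "n > 0"
    and z: "\<forall>i<n. z i \<ge> 0" and i0: "i0 < n" "z i0 > 0"
    and ge: "\<forall>i<n. r * z i \<le> mv n T z i" and rr: "rho T \<le> r"
  shows "\<forall>i<n. mv n T z i = r * z i \<and> z i > 0"
proof -
  define w where "w i = mv n T z i - r * z i" for i
  have w0: "\<forall>i<n. w i \<ge> 0" using ge unfolding w_def by auto
  have eq: "\<forall>i<n. mv n T z i = r * z i"
  proof (rule ccontr)
    assume "\<not> ?thesis"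
    then obtain i1 where i1a: "i1 < n" "mv n T z i1 \<noteq> r * z i1" by auto
    have "r * z i1 \<le> mv n T z i1" using ge i1a by auto
    then have i1: "i1 < n" "w i1 > 0" using i1a unfolding w_def by auto
    define u where "u = (fstep n T ^^ (n - 1)) z"
    have upos: "\<forall>j<n. u j > 0" unfolding u_def by (rule iter_pos[OF nn irr z i0])
    have ypos: "\<forall>j<n. (fstep n T ^^ (n - 1)) w j > 0" by (rule iter_pos[OF nn irr w0 i1])
    have li: "\<forall>i<n. mv n T u i - r * u i = (fstep n T ^^ (n - 1)) w i"
      unfolding u_def by (rule lin_iter, simp add: w_def)
    have "\<forall>i<n. r * u i < mv n T u i"
    proof (intro allI impI)
      fix i assume "i < n"
      with li ypos have "mv n T u i - r * u i > 0" by auto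
      then show "r * u i < mv n T u i" by simp
    qed
    from L1s[OF T nn n upos this] rr show False by auto
  qed
  have pos: "\<forall>i<n. z i > 0"
  proof (rule ccontr)
    assume "\<not> ?thesis"
    then obtain a where a: "a < n" "\<not> z a > 0" by auto
    then have za: "z a = 0" using z by force
    define S where "S = supp n z"
    have aS: "a \<notin> S" using a unfolding S_def supp_def by auto
    have i0S: "i0 \<in> S" using i0 unfolding S_def supp_def by auto
    have "S \<subseteq> {..<n}" "S \<noteq> {}" "S \<noteq> {..<n}"
    proof -
      show "S \<subseteq> {..<n}" unfolding S_def supp_def by auto
      show "S \<noteq> {}" using i0S by blast
      show "S \<noteq> {..<n}" using aS a(1) by blast
    qed
    from irr[unfolded irr_def, rule_format, OF conjI[OF this(1) conjI[OF this(2,3)]]]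
    obtain a' b where a': "a' < n" "a' \<notin> S" and b: "b \<in> S" and t: "T $$ (a',b) \<noteq> 0" by auto
    have bn: "b < n" "z b > 0" using b unfolding S_def supp_def by auto
    have "\<not> z a' > 0" using a' unfolding S_def supp_def by auto
    then have za': "z a' = 0" using a' z by force
    have "T $$ (a',b) \<ge> 0" using nn a' bn unfolding nonneg_mat_def by auto
    then have "T $$ (a',b) > 0" using t by auto
    then have "0 < T $$ (a',b) * z b" using bn by auto
    also have "\<dots> \<le> mv n T z a'" by (rule mv_ge_term[OF nn z a'(1) bn(1)])
    also have "\<dots> = 0" using eq a' za' by auto
    finally show False by auto
  qed
  show ?thesis using eq pos by auto
qed

lemma perron:
  assumes T: "T \<in> carrier_mat n n" and nn: "nonneg_mat n T" and irr: "irr n T" and n: "n > 0"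
  shows "\<exists>z. \<forall>i<n. z i > 0 \<and> mv n T z i = rho T * z i"
proof -
  from perron_sub[OF T nn n] obtain z where z: "\<forall>i<n. z i \<ge> 0" "\<exists>i<n. z i > 0"
    "\<forall>i<n. rho T * z i \<le> mv n T z i" by blast
  from z(2) obtain i0 where "i0 < n" "z i0 > 0" by auto
  from KL[OF T nn irr n z(1) this z(3) order_refl] show ?thesis by auto
qed

lemma perm_entry:
  assumes p: "p permutes {..<n}" and M: "M \<in> carrier_mat n n" and i: "i < n" and j: "j < n"
  shows "(transpose_mat (perm_matrix n p) * M * perm_matrix n p) $$ (i,j) = M $$ (p i, p j)"
proof -
  define P where "P = perm_matrix n p"
  have P: "P \<in> carrier_mat n n" unfolding P_def perm_matrix_def by auto
  have Pe: "\<And>a b. a < n \<Longrightarrow> b < n \<Longrightarrow> P $$ (a,b) = (if a = p b then 1 else 0)"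
    unfolding P_def perm_matrix_def by auto
  have pi: "p i < n" "p j < n" using permutes_in_image[OF p, of i] permutes_in_image[OF p, of j] i j by auto
  have PTM: "(transpose_mat P * M) $$ (i,b) = M $$ (p i, b)" if b: "b < n" for b
  proof -
    have "(transpose_mat P * M) $$ (i,b) = (\<Sum>a\<in>{0..<n}. P $$ (a,i) * M $$ (a,b))"
      using P M i b by (simp add: scalar_prod_def)
    also have "\<dots> = (\<Sum>a\<in>{0..<n}. if a = p i then M $$ (a,b) else 0)"
      using Pe i by (intro sum.cong, auto)
    also have "\<dots> = M $$ (p i, b)" using pi by simp
    finally show ?thesis .
  qed
  define Q where "Q = transpose_mat P * M"
  have Q: "Q \<in> carrier_mat n n" unfolding Q_def using P M by auto
  have "(transpose_mat P * M * P) $$ (i,j) = (Q * P) $$ (i,j)" unfolding Q_def ..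
  also have "\<dots> = (\<Sum>b\<in>{0..<n}. Q $$ (i,b) * P $$ (b,j))"
    using P Q i j by (simp add: scalar_prod_def)
  finally have "(transpose_mat P * M * P) $$ (i,j) = (\<Sum>b\<in>{0..<n}. (transpose_mat P * M) $$ (i,b) * P $$ (b,j))"
    unfolding Q_def .
  also have "\<dots> = (\<Sum>b\<in>{0..<n}. if b = p j then M $$ (p i, b) else 0)"
    using Pe j PTM by (intro sum.cong, auto)
  also have "\<dots> = M $$ (p i, p j)" using pi by simp
  finally show ?thesis unfolding P_def .
qed

lemma red_to_set:
  assumes M: "M \<in> carrier_mat n n" and red: "reducible n M"
  shows "\<exists>S. S \<subseteq> {..<n} \<and> S \<noteq> {} \<and> S \<noteq> {..<n} \<and> (\<forall>a<n. \<forall>b\<in>S. a \<notin> S \<longrightarrow> M $$ (a,b) = 0)"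
proof -
  from red obtain p k where p: "p permutes {..<n}" and k: "0 < k" "k < n"
    and z: "\<forall>i j. k \<le> i \<and> i < n \<and> j < k \<longrightarrow> (transpose_mat (perm_matrix n p) * M * perm_matrix n p) $$ (i,j) = 0"
    unfolding reducible_def Let_def by blast
  define S where "S = p ` {..<k}"
  have sub: "S \<subseteq> {..<n}" unfolding S_def
  proof (rule image_subsetI)
    fix j assume "j \<in> {..<k}"
    then show "p j \<in> {..<n}" using permutes_in_image[OF p, of j] k by simp
  qed
  have "p 0 \<in> S" unfolding S_def using k by simp
  then have ne: "S \<noteq> {}" by blast
  have inj: "inj_on p {..<k}" using permutes_inj[OF p] by (rule inj_on_subset, auto)
  have "card S = k" unfolding S_def using card_image[OF inj] by simp
  then have nf: "S \<noteq> {..<n}" using k by auto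
  have zero: "M $$ (a,b) = 0" if a: "a < n" "a \<notin> S" and b: "b \<in> S" for a b
  proof -
    obtain j where j: "j < k" "b = p j" using b unfolding S_def by auto
    define i where "i = inv_into UNIV p a"
    have ia: "p i = a" unfolding i_def using permutes_inverses(1)[OF p] by auto
    have "i < n" unfolding i_def using a permutes_in_image[OF permutes_inv[OF p], of a] by auto
    moreover have "\<not> i < k"
    proof
      assume "i < k"
      then have "p i \<in> S" unfolding S_def by simp
      then show False using a ia by simp
    qed
    then have "k \<le> i" by simp
    have jn: "j < n" using j k by simp
    have e1: "(transpose_mat (perm_matrix n p) * M * perm_matrix n p) $$ (i,j) = 0"
      using z[rule_format, OF conjI[OF \<open>k \<le> i\<close> conjI[OF \<open>i < n\<close> j(1)]]] .
    have e2: "(transpose_mat (perm_matrix n p) * M * perm_matrix n p) $$ (i,j) = M $$ (p i, p j)"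
      by (rule perm_entry[OF p M \<open>i < n\<close> jn])
    have "M $$ (p i, p j) = 0" by (simp only: e2[symmetric] e1)
    then show ?thesis using ia j(2) by simp
  qed
  show ?thesis using sub ne nf zero by blast
qed

lemma set_to_red:
  assumes M: "M \<in> carrier_mat n n" and sub: "S \<subseteq> {..<n}" and ne: "S \<noteq> {}" and nf: "S \<noteq> {..<n}"
    and zero: "\<forall>a<n. \<forall>b\<in>S. a \<notin> S \<longrightarrow> M $$ (a,b) = 0"
  shows "reducible n M"
proof -
  define k where "k = card S"
  have finS: "finite S" using sub finite_subset by blast
  have k0: "0 < k" unfolding k_def using finS ne by (simp add: card_gt_0_iff)
  have kn: "k < n" unfolding k_def using psubset_card_mono[of "{..<n}" S] sub nf by auto
  define R where "R = {..<n} - S"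
  have cR: "card R = n - k" unfolding R_def k_def using sub finS by (simp add: card_Diff_subset)
  obtain f where f: "bij_betw f {0..<k} S" using ex_bij_betw_nat_finite[OF finS] unfolding k_def by auto
  obtain g where g: "bij_betw g {0..<n-k} R" using ex_bij_betw_nat_finite[of R] cR unfolding R_def by auto
  define p where "p i = (if i < k then f i else if i < n then g (i - k) else i)" for i
  have b1: "bij_betw p {0..<k} S" using f by (rule bij_betw_cong[THEN iffD1, rotated], auto simp: p_def)
  have sh: "bij_betw (\<lambda>i. i - k) {k..<n} {0..<n-k}"
    by (rule bij_betw_byWitness[of _ "\<lambda>i. i + k"], auto)
  have "bij_betw (g \<circ> (\<lambda>i. i - k)) {k..<n} R" by (rule bij_betw_trans[OF sh g])
  then have b2: "bij_betw p {k..<n} R"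
    by (rule bij_betw_cong[THEN iffD1, rotated], auto simp: p_def)
  have "bij_betw p ({0..<k} \<union> {k..<n}) (S \<union> R)" by (rule bij_betw_combine[OF b1 b2], auto simp: R_def)
  moreover have "{0..<k} \<union> {k..<n} = {..<n}" using kn by auto
  moreover have "S \<union> R = {..<n}" using sub unfolding R_def by auto
  ultimately have "bij_betw p {..<n} {..<n}" by simp
  then have p: "p permutes {..<n}" by (rule bij_imp_permutes, insert kn, auto simp: p_def)
  have "\<forall>i j. k \<le> i \<and> i < n \<and> j < k \<longrightarrow> (transpose_mat (perm_matrix n p) * M * perm_matrix n p) $$ (i,j) = 0"
  proof (intro allI impI)
    fix i j assume ij: "k \<le> i \<and> i < n \<and> j < k"
    have "p i \<in> R" using b2 ij unfolding bij_betw_def by auto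
    moreover have "p j \<in> S" using b1 ij unfolding bij_betw_def by auto
    ultimately have "M $$ (p i, p j) = 0" using zero unfolding R_def by auto
    then show "(transpose_mat (perm_matrix n p) * M * perm_matrix n p) $$ (i,j) = 0"
      using perm_entry[OF p M, of i j] ij kn by auto
  qed
  then show ?thesis unfolding reducible_def Let_def using p k0 kn by blast
qed

lemma ent_M: "A \<in> carrier_mat n n \<Longrightarrow> i < n \<Longrightarrow> j < n \<Longrightarrow>
  (A - 1\<^sub>m n) $$ (i,j) = A $$ (i,j) - (if i = j then 1 else 0)"
  by auto

lemma ent_sI: "B \<in> carrier_mat n n \<Longrightarrow> i < n \<Longrightarrow> j < n \<Longrightarrow>
  (s \<cdot>\<^sub>m 1\<^sub>m n - B) $$ (i,j) = (if i = j then s else 0) - (B $$ (i,j) :: real)"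
  by auto

lemma diag_carrier: "dim_vec d = n \<Longrightarrow> diag_vec d \<in> carrier_mat n n"
  unfolding diag_vec_def by auto

lemma ent_diag: "dim_vec d = n \<Longrightarrow> X \<in> carrier_mat n n \<Longrightarrow> i < n \<Longrightarrow> j < n \<Longrightarrow>
  (X + diag_vec d) $$ (i,j) = X $$ (i,j) + (if i = j then d $ i else 0)"
  unfolding diag_vec_def by auto

lemma ent_mv: "X \<in> carrier_mat n n \<Longrightarrow> dim_vec v = n \<Longrightarrow> i < n \<Longrightarrow>
  (X *\<^sub>v v) $ i = (\<Sum>j<n. X $$ (i,j) * v $ j)"
  by (auto simp: scalar_prod_def lessThan_atLeast0 intro!: sum.cong)

lemma sum_delta_mult: "i < (n::nat) \<Longrightarrow> (\<Sum>j<n. (if i = j then s else 0) * x j) = s * (x i :: real)"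
proof -
  assume i: "i < n"
  have "(\<Sum>j<n. (if i = j then s else 0) * x j) = (\<Sum>j<n. if j = i then s * x j else 0)"
    by (intro sum.cong, auto)
  also have "\<dots> = s * x i" using i by (subst sum.delta, auto)
  finally show ?thesis .
qed

lemma nonneg_transpose: "B \<in> carrier_mat n n \<Longrightarrow> nonneg_mat n B \<Longrightarrow> nonneg_mat n (transpose_mat B)"
  unfolding nonneg_mat_def by auto

lemma mv_transpose: "B \<in> carrier_mat n n \<Longrightarrow> i < n \<Longrightarrow> mv n (transpose_mat B) x i = (\<Sum>j<n. B $$ (j,i) * x j)"
  unfolding mv_def by (intro sum.cong, auto)

lemma dir2:
  fixes A :: "real mat" and n :: nat
  assumes A: "A \<in> carrier_mat n n" and n1: "n \<ge> 1"
    and irrM: "irreducible_mat n (A - 1\<^sub>m n)" and sing: "singular_M_matrix n (A - 1\<^sub>m n)"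
  shows "(\<exists>v. dim_vec v = n \<and> (\<forall>i<n. v $ i > 0) \<and> (transpose_mat A - 1\<^sub>m n) *\<^sub>v v = 0\<^sub>v n) \<and>
          (\<forall>d. dim_vec d = n \<and> (\<forall>i<n. d $ i \<ge> 0) \<and> d \<noteq> 0\<^sub>v n \<longrightarrow>
               nonsingular_M_matrix n (A - 1\<^sub>m n + diag_vec d))"
proof -
  have n: "n > 0" using n1 by auto
  from sing obtain s B where B: "B \<in> carrier_mat n n" and nn: "nonneg_mat n B"
    and MB: "A - 1\<^sub>m n = s \<cdot>\<^sub>m 1\<^sub>m n - B" and sB: "s = rho B"
    unfolding singular_M_matrix_def by blast
  have Me: "A $$ (i,j) - (if i = j then 1 else 0) = (if i = j then s else 0) - B $$ (i,j)"
    if "i < n" "j < n" for i j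
    using ent_M[OF A that] ent_sI[OF B that, of s] MB by simp
  have irrB: "irr n B"
    unfolding irr_def
  proof (intro allI impI)
    fix S assume S: "S \<subseteq> {..<n} \<and> S \<noteq> {} \<and> S \<noteq> {..<n}"
    show "\<exists>a<n. a \<notin> S \<and> (\<exists>b\<in>S. B $$ (a,b) \<noteq> 0)"
    proof (rule ccontr)
      assume "\<not> ?thesis"
      then have B0: "\<forall>a<n. \<forall>b\<in>S. a \<notin> S \<longrightarrow> B $$ (a,b) = 0" by blast
      have z: "\<forall>a<n. \<forall>b\<in>S. a \<notin> S \<longrightarrow> (A - 1\<^sub>m n) $$ (a,b) = 0"
      proof (intro allI impI ballI)
        fix a b assume a: "a < n" and b: "b \<in> S" and aS: "a \<notin> S"
        have bn: "b < n" using S b by auto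
        have ab: "a \<noteq> b" using aS b by auto
        have "(A - 1\<^sub>m n) $$ (a,b) = A $$ (a,b) - (if a = b then 1 else 0)" by (rule ent_M[OF A a bn])
        also have "\<dots> = (if a = b then s else 0) - B $$ (a,b)" by (rule Me[OF a bn])
        also have "\<dots> = 0" using ab B0 a b aS by simp
        finally show "(A - 1\<^sub>m n) $$ (a,b) = 0" .
      qed
      have "reducible n (A - 1\<^sub>m n)"
        by (rule set_to_red[OF _ _ _ _ z], insert A S, auto)
      then show False using irrM unfolding irreducible_mat_def by auto
    qed
  qed
  have BT: "transpose_mat B \<in> carrier_mat n n" using B by auto
  have nnT: "nonneg_mat n (transpose_mat B)" by (rule nonneg_transpose[OF B nn])
  have irrBT: "irr n (transpose_mat B)"
    unfolding irr_def
  proof (intro allI impI)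
    fix S assume S: "S \<subseteq> {..<n} \<and> S \<noteq> {} \<and> S \<noteq> {..<n}"
    define R where "R = {..<n} - S"
    have "R \<subseteq> {..<n}" "R \<noteq> {}" "R \<noteq> {..<n}" using S unfolding R_def by auto
    from irrB[unfolded irr_def, rule_format, OF conjI[OF this(1) conjI[OF this(2,3)]]]
    obtain a b where a: "a < n" "a \<notin> R" and b: "b \<in> R" and t: "B $$ (a,b) \<noteq> 0" by auto
    have "b < n" "b \<notin> S" "a \<in> S" using a b unfolding R_def by auto
    then show "\<exists>a<n. a \<notin> S \<and> (\<exists>b\<in>S. transpose_mat B $$ (a,b) \<noteq> 0)"
      using t a B by (intro exI[of _ b] conjI bexI[of _ a], auto)
  qed
  from perron[OF BT nnT irrBT n] obtain z where z: "\<forall>i<n. z i > 0 \<and> mv n (transpose_mat B) z i = rho (transpose_mat B) * z i"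
    by blast
  have rT: "rho (transpose_mat B) = s" using rho_transpose[OF B] sB by simp
  have part1: "\<exists>v. dim_vec v = n \<and> (\<forall>i<n. v $ i > 0) \<and> (transpose_mat A - 1\<^sub>m n) *\<^sub>v v = 0\<^sub>v n"
  proof (intro exI[of _ "vec n z"] conjI allI impI)
    show "dim_vec (vec n z) = n" by simp
    fix i assume "i < n" then show "vec n z $ i > 0" using z by simp
  next
    show "(transpose_mat A - 1\<^sub>m n) *\<^sub>v vec n z = 0\<^sub>v n"
    proof (rule eq_vecI)
      fix i assume i: "i < dim_vec (0\<^sub>v n :: real vec)"
      then have i: "i < n" by simp
      have C: "transpose_mat A - 1\<^sub>m n \<in> carrier_mat n n" using A by auto
      have "((transpose_mat A - 1\<^sub>m n) *\<^sub>v vec n z) $ i = (\<Sum>j<n. (transpose_mat A - 1\<^sub>m n) $$ (i,j) * z j)"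
        using ent_mv[OF C, of "vec n z" i] i by simp
      also have "\<dots> = (\<Sum>j<n. ((if i = j then s else 0) - B $$ (j,i)) * z j)"
      proof (intro sum.cong refl)
        fix j assume "j \<in> {..<n}"
        then have j: "j < n" by simp
        have "(transpose_mat A - 1\<^sub>m n) $$ (i,j) = A $$ (j,i) - (if j = i then 1 else 0)"
          using A i j by auto
        also have "\<dots> = (if j = i then s else 0) - B $$ (j,i)" by (rule Me[OF j i])
        finally show "(transpose_mat A - 1\<^sub>m n) $$ (i,j) * z j = ((if i = j then s else 0) - B $$ (j,i)) * z j"
          by (simp add: eq_commute[of j i])
      qed
      also have "\<dots> = (\<Sum>j<n. (if i = j then s else 0) * z j) - (\<Sum>j<n. B $$ (j,i) * z j)"
        by (simp add: left_diff_distrib sum_subtractf)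
      also have "\<dots> = s * z i - mv n (transpose_mat B) z i"
        using sum_delta_mult[OF i] mv_transpose[OF B i] by simp
      also have "\<dots> = 0" using z i rT by simp
      finally show "((transpose_mat A - 1\<^sub>m n) *\<^sub>v vec n z) $ i = 0\<^sub>v n $ i" using i by simp
    qed simp
  qed
  have part2: "nonsingular_M_matrix n (A - 1\<^sub>m n + diag_vec d)"
    if d: "dim_vec d = n" "\<forall>i<n. d $ i \<ge> 0" "d \<noteq> 0\<^sub>v n" for d
  proof -
    define c where "c = (\<Sum>i<n. d $ i)"
    have dc: "d $ i \<le> c" if "i < n" for i
      unfolding c_def by (rule member_le_sum, insert d that, auto)
    define C where "C = B + c \<cdot>\<^sub>m 1\<^sub>m n - diag_vec d"
    have Cc: "C \<in> carrier_mat n n" unfolding C_def using B diag_carrier[OF d(1)] by auto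
    have Ce: "C $$ (i,j) = B $$ (i,j) + (if i = j then c - d $ i else 0)" if "i < n" "j < n" for i j
      unfolding C_def using B d(1) that by (auto simp: diag_vec_def)
    have nnC: "nonneg_mat n C" unfolding nonneg_mat_def using Ce nn dc
      unfolding nonneg_mat_def by (auto intro: add_nonneg_nonneg)
    have eqM: "A - 1\<^sub>m n + diag_vec d = (s + c) \<cdot>\<^sub>m 1\<^sub>m n - C"
    proof (rule eq_matI)
      fix i j assume ij: "i < dim_row ((s + c) \<cdot>\<^sub>m 1\<^sub>m n - C)" "j < dim_col ((s + c) \<cdot>\<^sub>m 1\<^sub>m n - C)"
      then have ij: "i < n" "j < n" using Cc by auto
      have "(A - 1\<^sub>m n + diag_vec d) $$ (i,j) = (A - 1\<^sub>m n) $$ (i,j) + (if i = j then d $ i else 0)"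
        by (rule ent_diag[OF d(1) _ ij], insert A, auto)
      also have "\<dots> = (if i = j then s else 0) - B $$ (i,j) + (if i = j then d $ i else 0)"
        using ent_M[OF A ij] Me[OF ij] by simp
      also have "\<dots> = ((s + c) \<cdot>\<^sub>m 1\<^sub>m n - C) $$ (i,j)"
        using ent_sI[OF Cc ij, of "s + c"] Ce[OF ij] by auto
      finally show "(A - 1\<^sub>m n + diag_vec d) $$ (i,j) = ((s + c) \<cdot>\<^sub>m 1\<^sub>m n - C) $$ (i,j)" .
    qed (insert A Cc diag_carrier[OF d(1)], auto)
    have lt: "rho C < s + c"
    proof (rule ccontr)
      assume "\<not> ?thesis"
      then have ge: "s + c \<le> rho C" by simp
      from perron_sub[OF Cc nnC n] obtain y where y: "\<forall>i<n. y i \<ge> 0" "\<exists>i<n. y i > 0"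
        "\<forall>i<n. rho C * y i \<le> mv n C y i" by blast
      from y(2) obtain i0 where i0: "i0 < n" "y i0 > 0" by auto
      have mvC: "mv n C y i = mv n B y i + (c - d $ i) * y i" if i: "i < n" for i
      proof -
        have "mv n C y i = (\<Sum>j<n. B $$ (i,j) * y j + (if i = j then c - d $ i else 0) * y j)"
          unfolding mv_def using Ce i by (intro sum.cong, auto simp: distrib_right)
        also have "\<dots> = mv n B y i + (c - d $ i) * y i"
          unfolding mv_def sum.distrib using sum_delta_mult[OF i] by simp
        finally show ?thesis .
      qed
      have ge2: "(s + c) * y i \<le> mv n B y i + (c - d $ i) * y i" if i: "i < n" for i
        using mult_right_mono[OF ge, of "y i"] y(1) y(3) mvC[OF i] i by auto
      have ge3: "s * y i \<le> mv n B y i" if i: "i < n" for i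
      proof -
        have "0 \<le> d $ i * y i" using d(2) y(1) i by auto
        then show ?thesis using ge2[OF i] by (simp add: algebra_simps)
      qed
      from KL[OF B nn irrB n y(1) i0 _ ] ge3 sB
      have pos: "\<forall>i<n. mv n B y i = s * y i \<and> y i > 0" by auto
      have "d $ i = 0" if i: "i < n" for i
      proof -
        have "d $ i * y i \<le> 0" using ge2[OF i] pos i by (simp add: algebra_simps)
        moreover have "y i > 0" using pos i by auto
        ultimately have "d $ i \<le> 0" by (simp add: mult_le_0_iff)
        then show ?thesis using d(2) i by auto
      qed
      then have "d = 0\<^sub>v n" using d(1) by (intro eq_vecI, auto)
      then show False using d(3) by auto
    qed
    show ?thesis unfolding nonsingular_M_matrix_def
      by (intro conjI exI[of _ "s + c"] exI[of _ C], insert A diag_carrier[OF d(1)] Cc nnC eqM lt, auto)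
  qed
  show ?thesis using part1 part2 by blast
qed

lemma dir1:
  fixes A :: "real mat" and n :: nat
  assumes A: "A \<in> carrier_mat n n" and n1: "n \<ge> 1"
    and v: "dim_vec v = n" "\<forall>i<n. v $ i > 0" "(transpose_mat A - 1\<^sub>m n) *\<^sub>v v = 0\<^sub>v n"
    and H: "\<forall>d. dim_vec d = n \<and> (\<forall>i<n. d $ i \<ge> 0) \<and> d \<noteq> 0\<^sub>v n \<longrightarrow>
               nonsingular_M_matrix n (A - 1\<^sub>m n + diag_vec d)"
  shows "irreducible_mat n (A - 1\<^sub>m n) \<and> singular_M_matrix n (A - 1\<^sub>m n)"
proof -
  have n: "n > 0" using n1 by auto
  define M where "M = A - 1\<^sub>m n"
  have Mc: "M \<in> carrier_mat n n" unfolding M_def using A by auto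
  define vf where "vf i = v $ i" for i
  have vpos: "\<forall>i<n. vf i > 0" using v unfolding vf_def by auto
  have Mv: "(\<Sum>a<n. M $$ (a,b) * vf a) = 0" if b: "b < n" for b
  proof -
    have C: "transpose_mat A - 1\<^sub>m n \<in> carrier_mat n n" using A by auto
    have "0 = ((transpose_mat A - 1\<^sub>m n) *\<^sub>v v) $ b" using v b by simp
    also have "\<dots> = (\<Sum>a<n. (transpose_mat A - 1\<^sub>m n) $$ (b,a) * v $ a)" by (rule ent_mv[OF C v(1) b])
    also have "\<dots> = (\<Sum>a<n. M $$ (a,b) * vf a)"
      unfolding M_def vf_def using A b by (intro sum.cong refl, auto)
    finally show ?thesis by simp
  qed
  define d0 :: "real vec" where "d0 = unit_vec n 0"
  have d0: "dim_vec d0 = n" "\<forall>i<n. d0 $ i \<ge> 0" "d0 \<noteq> 0\<^sub>v n"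
  proof -
    show "dim_vec d0 = n" unfolding d0_def by simp
    show "\<forall>i<n. d0 $ i \<ge> 0" unfolding d0_def by (auto simp: unit_vec_def)
    have "d0 $ 0 = 1" unfolding d0_def using n by (simp add: unit_vec_def)
    then show "d0 \<noteq> 0\<^sub>v n" using n by auto
  qed
  from H d0 have "nonsingular_M_matrix n (A - 1\<^sub>m n + diag_vec d0)" by blast
  then obtain s0 B0 where B0: "B0 \<in> carrier_mat n n" "nonneg_mat n B0"
    and e0: "A - 1\<^sub>m n + diag_vec d0 = s0 \<cdot>\<^sub>m 1\<^sub>m n - B0"
    unfolding nonsingular_M_matrix_def by blast
  have offd: "M $$ (i,j) \<le> 0" if ij: "i < n" "j < n" "i \<noteq> j" for i j
  proof -
    have "M $$ (i,j) = (A - 1\<^sub>m n + diag_vec d0) $$ (i,j)"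
      using ent_diag[OF d0(1) Mc ij(1,2)] ij unfolding M_def by simp
    also have "\<dots> = - B0 $$ (i,j)" using e0 ent_sI[OF B0(1) ij(1,2), of s0] ij by simp
    finally show ?thesis using B0(2) ij unfolding nonneg_mat_def by auto
  qed
  define s where "s = (\<Sum>i<n. \<bar>M $$ (i,i)\<bar>)"
  define B where "B = s \<cdot>\<^sub>m 1\<^sub>m n - M"
  have Bc: "B \<in> carrier_mat n n" unfolding B_def using Mc by auto
  have Be: "B $$ (i,j) = (if i = j then s else 0) - M $$ (i,j)" if "i < n" "j < n" for i j
    unfolding B_def by (rule ent_sI[OF Mc that])
  have nnB: "nonneg_mat n B" unfolding nonneg_mat_def
  proof (intro allI impI)
    fix i j assume ij: "i < n" "j < n"
    show "B $$ (i,j) \<ge> 0"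
    proof (cases "i = j")
      case True
      have "\<bar>M $$ (i,i)\<bar> \<le> s" unfolding s_def by (rule member_le_sum, insert ij, auto)
      then show ?thesis using Be[OF ij] True by auto
    next
      case False
      then show ?thesis using Be[OF ij] offd[OF ij False] by auto
    qed
  qed
  have MB: "M = s \<cdot>\<^sub>m 1\<^sub>m n - B"
    by (rule eq_matI, insert Mc Bc Be, auto)
  have BTv: "mv n (transpose_mat B) vf i = s * vf i" if i: "i < n" for i
  proof -
    have "mv n (transpose_mat B) vf i = (\<Sum>j<n. ((if j = i then s else 0) - M $$ (j,i)) * vf j)"
      unfolding mv_transpose[OF Bc i] using Be i by (intro sum.cong, auto)
    also have "\<dots> = (\<Sum>j<n. (if i = j then s else 0) * vf j) - (\<Sum>j<n. M $$ (j,i) * vf j)"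
      by (simp add: left_diff_distrib sum_subtractf eq_commute[of _ i])
    also have "\<dots> = s * vf i" using sum_delta_mult[OF i] Mv[OF i] by simp
    finally show ?thesis .
  qed
  have BTc: "transpose_mat B \<in> carrier_mat n n" using Bc by auto
  have rge: "s \<le> rho B"
  proof -
    have "s \<le> rho (transpose_mat B)"
      by (rule L1[OF BTc nonneg_transpose[OF Bc nnB] n, of vf 0], insert vpos n BTv, auto)
    then show ?thesis using rho_transpose[OF Bc] by simp
  qed
  have rle: "rho B \<le> s"
  proof -
    from perron_sub[OF Bc nnB n] obtain z where z: "\<forall>i<n. z i \<ge> 0" "\<exists>i<n. z i > 0"
      "\<forall>i<n. rho B * z i \<le> mv n B z i" by blast
    from z(2) obtain i0 where i0: "i0 < n" "z i0 > 0" by auto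
    have pos: "(\<Sum>i<n. vf i * z i) > 0"
    proof -
      have "0 < vf i0 * z i0" using vpos i0 by auto
      also have "\<dots> \<le> (\<Sum>i<n. vf i * z i)"
        by (rule member_le_sum, insert vpos z i0, auto intro: less_imp_le)
      finally show ?thesis .
    qed
    have "rho B * (\<Sum>i<n. vf i * z i) = (\<Sum>i<n. vf i * (rho B * z i))"
      by (simp add: sum_distrib_left algebra_simps)
    also have "\<dots> \<le> (\<Sum>i<n. vf i * mv n B z i)"
      using vpos z(3) by (intro sum_mono mult_left_mono, auto intro: less_imp_le)
    also have "\<dots> = (\<Sum>i<n. \<Sum>j<n. vf i * B $$ (i,j) * z j)"
      unfolding mv_def by (simp add: sum_distrib_left mult.assoc)
    also have "\<dots> = (\<Sum>j<n. \<Sum>i<n. vf i * B $$ (i,j) * z j)" by (rule sum.swap)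
    also have "\<dots> = (\<Sum>j<n. mv n (transpose_mat B) vf j * z j)"
    proof (intro sum.cong refl)
      fix j assume "j \<in> {..<n}"
      then have j: "j < n" by simp
      show "(\<Sum>i<n. vf i * B $$ (i,j) * z j) = mv n (transpose_mat B) vf j * z j"
        unfolding mv_transpose[OF Bc j] by (simp add: sum_distrib_left sum_distrib_right mult_ac)
    qed
    also have "\<dots> = s * (\<Sum>j<n. vf j * z j)"
      using BTv by (simp add: sum_distrib_left algebra_simps)
    finally show ?thesis using pos by (simp add: mult_le_cancel_right)
  qed
  have sing: "singular_M_matrix n M"
    unfolding singular_M_matrix_def
    by (intro conjI exI[of _ s] exI[of _ B], insert Mc Bc nnB MB rge rle, auto)
  have nred: "\<not> reducible n M"
  proof
    assume "reducible n M"
    from red_to_set[OF Mc this] obtain S where S: "S \<subseteq> {..<n}" "S \<noteq> {}" "S \<noteq> {..<n}"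
      and zS: "\<forall>a<n. \<forall>b\<in>S. a \<notin> S \<longrightarrow> M $$ (a,b) = 0" by blast
    define d :: "real vec" where "d = vec n (\<lambda>i. if i \<in> S then 0 else 1)"
    obtain a0 where a0: "a0 < n" "a0 \<notin> S" using S by auto
    have d: "dim_vec d = n" "\<forall>i<n. d $ i \<ge> 0" "d \<noteq> 0\<^sub>v n"
    proof -
      show "dim_vec d = n" unfolding d_def by simp
      show "\<forall>i<n. d $ i \<ge> 0" unfolding d_def by auto
      have "d $ a0 = 1" unfolding d_def using a0 by simp
      then show "d \<noteq> 0\<^sub>v n" using a0 by auto
    qed
    from H d have "nonsingular_M_matrix n (A - 1\<^sub>m n + diag_vec d)" by blast
    then obtain s' B' where B': "B' \<in> carrier_mat n n" "nonneg_mat n B'"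
      and e': "A - 1\<^sub>m n + diag_vec d = s' \<cdot>\<^sub>m 1\<^sub>m n - B'" and lt: "s' > rho B'"
      unfolding nonsingular_M_matrix_def by blast
    have B'e: "B' $$ (a,b) = (if a = b then s' else 0) - M $$ (a,b) - (if a = b then d $ a else 0)"
      if ab: "a < n" "b < n" for a b
    proof -
      have "(if a = b then s' else 0) - B' $$ (a,b) = M $$ (a,b) + (if a = b then d $ a else 0)"
        using ent_sI[OF B'(1) ab, of s'] ent_diag[OF d(1) Mc ab] e' unfolding M_def by simp
      then show ?thesis by simp
    qed
    define w where "w i = (if i \<in> S then vf i else 0)" for i
    obtain i0 where i0: "i0 \<in> S" using S by auto
    have i0n: "i0 < n" using i0 S by auto
    have B'Tc: "transpose_mat B' \<in> carrier_mat n n" using B' by auto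
    have wge: "s' * w b \<le> mv n (transpose_mat B') w b" if b: "b < n" for b
    proof (cases "b \<in> S")
      case False
      have "mv n (transpose_mat B') w b \<ge> 0"
        by (rule mv_nonneg[OF nonneg_transpose[OF B'] _ b], insert vpos, auto simp: w_def intro: less_imp_le)
      then show ?thesis using False by (simp add: w_def)
    next
      case True
      have "mv n (transpose_mat B') w b = (\<Sum>a<n. B' $$ (a,b) * w a)" by (rule mv_transpose[OF B'(1) b])
      also have "\<dots> = (\<Sum>a<n. (if a = b then s' else 0) * vf a - M $$ (a,b) * vf a)"
      proof (intro sum.cong refl)
        fix a assume "a \<in> {..<n}"
        then have a: "a < n" by simp
        show "B' $$ (a,b) * w a = (if a = b then s' else 0) * vf a - M $$ (a,b) * vf a"
        proof (cases "a \<in> S")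
          case True
          then have "d $ a = 0" using a unfolding d_def by simp
          then have "B' $$ (a,b) = (if a = b then s' else 0) - M $$ (a,b)" using B'e[OF a b] by (cases "a = b", auto)
          then show ?thesis using True unfolding w_def by (simp add: left_diff_distrib)
        next
          case False
          then have "a \<noteq> b" using \<open>b \<in> S\<close> by auto
          moreover have "M $$ (a,b) = 0" using zS a \<open>b \<in> S\<close> False by auto
          ultimately show ?thesis using False unfolding w_def by simp
        qed
      qed
      also have "\<dots> = (\<Sum>a<n. (if b = a then s' else 0) * vf a) - (\<Sum>a<n. M $$ (a,b) * vf a)"
        by (simp add: sum_subtractf eq_commute[of _ b])
      also have "\<dots> = s' * vf b" using sum_delta_mult[OF b] Mv[OF b] by simp
      finally show ?thesis using True by (simp add: w_def)
    qed
    have "s' \<le> rho (transpose_mat B')"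
      by (rule L1[OF B'Tc nonneg_transpose[OF B'] n, of w i0], insert vpos wge i0 i0n,
          auto simp: w_def intro: less_imp_le)
    then show False using rho_transpose[OF B'(1)] lt by simp
  qed
  show ?thesis using sing nred Mc unfolding irreducible_mat_def M_def by auto
qed

theorem proposition4p1:
  fixes A :: "real mat" and n :: nat
  assumes "A \<in> carrier_mat n n" and "n \<ge> 1"
  shows "((\<exists>v. dim_vec v = n \<and> (\<forall>i<n. v $ i > 0) \<and> (transpose_mat A - 1\<^sub>m n) *\<^sub>v v = 0\<^sub>v n) \<and>
          (\<forall>d. dim_vec d = n \<and> (\<forall>i<n. d $ i \<ge> 0) \<and> d \<noteq> 0\<^sub>v n \<longrightarrow>
               nonsingular_M_matrix n (A - 1\<^sub>m n + diag_vec d)))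
     \<longleftrightarrow> (irreducible_mat n (A - 1\<^sub>m n) \<and> singular_M_matrix n (A - 1\<^sub>m n))"
proof
  assume h: "(\<exists>v. dim_vec v = n \<and> (\<forall>i<n. v $ i > 0) \<and> (transpose_mat A - 1\<^sub>m n) *\<^sub>v v = 0\<^sub>v n) \<and>
          (\<forall>d. dim_vec d = n \<and> (\<forall>i<n. d $ i \<ge> 0) \<and> d \<noteq> 0\<^sub>v n \<longrightarrow>
               nonsingular_M_matrix n (A - 1\<^sub>m n + diag_vec d))"
  then obtain v where v: "dim_vec v = n" "\<forall>i<n. v $ i > 0" "(transpose_mat A - 1\<^sub>m n) *\<^sub>v v = 0\<^sub>v n" by blast
  show "irreducible_mat n (A - 1\<^sub>m n) \<and> singular_M_matrix n (A - 1\<^sub>m n)"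
    by (rule dir1[OF assms v], insert h, blast)
next
  assume "irreducible_mat n (A - 1\<^sub>m n) \<and> singular_M_matrix n (A - 1\<^sub>m n)"
  then show "(\<exists>v. dim_vec v = n \<and> (\<forall>i<n. v $ i > 0) \<and> (transpose_mat A - 1\<^sub>m n) *\<^sub>v v = 0\<^sub>v n) \<and>
          (\<forall>d. dim_vec d = n \<and> (\<forall>i<n. d $ i \<ge> 0) \<and> d \<noteq> 0\<^sub>v n \<longrightarrow>
               nonsingular_M_matrix n (A - 1\<^sub>m n + diag_vec d))"
    using dir2[OF assms] by blast
qed

end
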